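(* Let $R$ be a commutative Noetherian ring and $n$ a non-negative integer. Let $M$ be a finitely generated $R$-module and $N$ an $R$-module which is in dimension $<n$. Then $\operatorname{Ext}^i_R(M,N)$ and $\operatorname{Tor}_i^R(M,N)$ are in dimension $<n$ for all $i$. In particular, for every ideal $\mathfrak a$ of $R$, $\operatorname{Ext}^i_R(R/\mathfrak a,N)$ and $\operatorname{Tor}^R_i(R/\mathfrak a,N)$ are in dimension $<n$ for all $i$.
   Context: For an $R$-module $L$, $\dim\operatorname{Supp}L=\sup\{\dim R/\mathfrak p:\mathfrak p\in\operatorname{Supp}L\}$, the zero module having dimension $-\infty$. An $R$-module $L$ is "in dimension $<n$" if there is a finitely generated submodule $N'\subseteq L$ with $\dim\operatorname{Supp}(L/N')<n$. *)

theory Defs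
  imports "HOL-Library.Extended_Real" "HOL-Library.Function_Algebras"
begin

definition ideal :: "'a::comm_ring_1 set \<Rightarrow> bool" where
  "ideal I \<longleftrightarrow> 0 \<in> I \<and> (\<forall>x\<in>I. \<forall>y\<in>I. x + y \<in> I) \<and> (\<forall>r. \<forall>x\<in>I. r * x \<in> I)"

definition prime_ideal :: "'a::comm_ring_1 set \<Rightarrow> bool" where
  "prime_ideal P \<longleftrightarrow> ideal P \<and> P \<noteq> UNIV \<and> (\<forall>a b. a * b \<in> P \<longrightarrow> a \<in> P \<or> b \<in> P)"

definition ideal_gen :: "'a::comm_ring_1 set \<Rightarrow> 'a set" where
  "ideal_gen S = \<Inter>{I. ideal I \<and> S \<subseteq> I}"

definition noetherian_ring :: "'a::comm_ring_1 itself \<Rightarrow> bool" where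
  "noetherian_ring _ \<longleftrightarrow> (\<forall>I::'a set. ideal I \<longrightarrow> (\<exists>S. finite S \<and> I = ideal_gen S))"

text \<open>A strict chain of prime ideals of length k lying over p (= chain of primes of R/p).\<close>
definition prime_chain_over :: "'a::comm_ring_1 set \<Rightarrow> nat \<Rightarrow> bool" where
  "prime_chain_over p k \<longleftrightarrow> (\<exists>c::nat \<Rightarrow> 'a set. (\<forall>j\<le>k. prime_ideal (c j)) \<and> p \<subseteq> c 0
      \<and> (\<forall>j<k. c j \<subset> c (Suc j)))"

text \<open>Krull dimension of R/p (for p prime), as an extended real.\<close>
definition dim_quot :: "'a::comm_ring_1 set \<Rightarrow> ereal" where
  "dim_quot p = Sup {ereal (real k) | k. prime_chain_over p k}"

definition module :: "('a::comm_ring_1 \<Rightarrow> 'v::ab_group_add \<Rightarrow> 'v) \<Rightarrow> bool" where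
  "module sm \<longleftrightarrow> (\<forall>a x y. sm a (x + y) = sm a x + sm a y) \<and> (\<forall>a b x. sm (a + b) x = sm a x + sm b x)
     \<and> (\<forall>a b x. sm (a * b) x = sm a (sm b x)) \<and> (\<forall>x. sm 1 x = x)"

definition submod :: "('a::comm_ring_1 \<Rightarrow> 'v::ab_group_add \<Rightarrow> 'v) \<Rightarrow> 'v set \<Rightarrow> bool" where
  "submod sm X \<longleftrightarrow> 0 \<in> X \<and> (\<forall>x\<in>X. \<forall>y\<in>X. x + y \<in> X) \<and> (\<forall>a. \<forall>x\<in>X. sm a x \<in> X)"

definition span :: "('a::comm_ring_1 \<Rightarrow> 'v::ab_group_add \<Rightarrow> 'v) \<Rightarrow> 'v set \<Rightarrow> 'v set" where
  "span sm G = \<Inter>{X. submod sm X \<and> G \<subseteq> X}"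

definition fin_gen :: "('a::comm_ring_1 \<Rightarrow> 'v::ab_group_add \<Rightarrow> 'v) \<Rightarrow> bool" where
  "fin_gen sm \<longleftrightarrow> (\<exists>G. finite G \<and> span sm G = UNIV)"

text \<open>Support of the subquotient module X/Y (Y \<subseteq> X submodules):
  p \<in> Supp(X/Y) iff (X/Y)_p \<noteq> 0 iff some x \<in> X has x/1 \<noteq> 0 in (X/Y)_p,
  i.e. s x \<notin> Y for all s \<notin> p.\<close>
definition supp :: "('a::comm_ring_1 \<Rightarrow> 'v::ab_group_add \<Rightarrow> 'v) \<Rightarrow> 'v set \<Rightarrow> 'v set \<Rightarrow> 'a set set" where
  "supp sm X Y = {p. prime_ideal p \<and> (\<exists>x\<in>X. \<forall>s. s \<notin> p \<longrightarrow> sm s x \<notin> Y)}"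

text \<open>dim Supp(X/Y) = sup of dim R/p over the support (Sup {} = -\<infinity>).\<close>
definition dim_supp :: "('a::comm_ring_1 \<Rightarrow> 'v::ab_group_add \<Rightarrow> 'v) \<Rightarrow> 'v set \<Rightarrow> 'v set \<Rightarrow> ereal" where
  "dim_supp sm X Y = Sup (dim_quot ` supp sm X Y)"

text \<open>The subquotient L = X/Y is in dimension < n: there is a finitely generated submodule
  N' = (span G + Y)/Y of L (G finite, G \<subseteq> X) with dim Supp(L/N') < n, where L/N' = X/(span (G \<union> Y)).\<close>
definition in_dim_lt :: "('a::comm_ring_1 \<Rightarrow> 'v::ab_group_add \<Rightarrow> 'v) \<Rightarrow> 'v set \<Rightarrow> 'v set \<Rightarrow> nat \<Rightarrow> bool" where
  "in_dim_lt sm X Y n \<longleftrightarrow> (\<exists>G. finite G \<and> G \<subseteq> X \<and> dim_supp sm X (span sm (G \<union> Y)) < ereal (real n))"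

text \<open>R^k as functions nat \<Rightarrow> R vanishing from k on; likewise N^k.\<close>
definition fvec :: "nat \<Rightarrow> (nat \<Rightarrow> 'v::zero) set" where
  "fvec k = {v. \<forall>j\<ge>k. v j = 0}"

text \<open>Matrix D (r \<times> c) acting R^c \<rightarrow> R^r.\<close>
definition dmap :: "nat \<Rightarrow> nat \<Rightarrow> (nat \<Rightarrow> nat \<Rightarrow> 'a::comm_ring_1) \<Rightarrow> (nat \<Rightarrow> 'a) \<Rightarrow> (nat \<Rightarrow> 'a)" where
  "dmap r c D v = (\<lambda>j. if j < r then (\<Sum>l<c. D j l * v l) else 0)"

text \<open>Exact complex ... \<rightarrow> R^(k 2) --d 1--> R^(k 1) --d 0--> R^(k 0), exact at every R^(k (i+1)).
  d i is a (k i) \<times> (k (i+1)) matrix.\<close>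
definition exact_tail :: "(nat \<Rightarrow> nat) \<Rightarrow> (nat \<Rightarrow> nat \<Rightarrow> nat \<Rightarrow> 'a::comm_ring_1) \<Rightarrow> bool" where
  "exact_tail k d \<longleftrightarrow> (\<forall>i. {v \<in> fvec (k (Suc i)). dmap (k i) (k (Suc i)) (d i) v = 0}
       = dmap (k (Suc i)) (k (Suc (Suc i))) (d (Suc i)) ` fvec (k (Suc (Suc i))))"

text \<open>Augmentation R^(k 0) \<rightarrow> M, e_j \<mapsto> g j.\<close>
definition augm :: "('a::comm_ring_1 \<Rightarrow> 'm::ab_group_add \<Rightarrow> 'm) \<Rightarrow> nat \<Rightarrow> (nat \<Rightarrow> 'm) \<Rightarrow> (nat \<Rightarrow> 'a) \<Rightarrow> 'm" where
  "augm sm r g v = (\<Sum>j<r. sm (v j) (g j))"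

definition free_resolution :: "('a::comm_ring_1 \<Rightarrow> 'm::ab_group_add \<Rightarrow> 'm) \<Rightarrow> (nat \<Rightarrow> nat)
    \<Rightarrow> (nat \<Rightarrow> nat \<Rightarrow> nat \<Rightarrow> 'a) \<Rightarrow> (nat \<Rightarrow> 'm) \<Rightarrow> bool" where
  "free_resolution sm k d g \<longleftrightarrow> exact_tail k d
     \<and> augm sm (k 0) g ` fvec (k 0) = UNIV
     \<and> {v \<in> fvec (k 0). augm sm (k 0) g v = 0} = dmap (k 0) (k 1) (d 0) ` fvec (k 1)"

definition vsm :: "('a \<Rightarrow> 'n \<Rightarrow> 'n) \<Rightarrow> 'a \<Rightarrow> (nat \<Rightarrow> 'n) \<Rightarrow> (nat \<Rightarrow> 'n)" where
  "vsm sm a y = (\<lambda>j. sm a (y j))"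

text \<open>Hom(d,N): Hom(R^r,N) = N^r \<rightarrow> N^c = Hom(R^c,N) for D : R^c \<rightarrow> R^r.\<close>
definition dual_map :: "('a::comm_ring_1 \<Rightarrow> 'n::ab_group_add \<Rightarrow> 'n) \<Rightarrow> nat \<Rightarrow> nat \<Rightarrow> (nat \<Rightarrow> nat \<Rightarrow> 'a)
    \<Rightarrow> (nat \<Rightarrow> 'n) \<Rightarrow> (nat \<Rightarrow> 'n)" where
  "dual_map sm r c D y = (\<lambda>l. if l < c then (\<Sum>j<r. sm (D j l) (y j)) else 0)"

text \<open>d \<otimes> N: R^c \<otimes> N = N^c \<rightarrow> N^r = R^r \<otimes> N.\<close>
definition tens_map :: "('a::comm_ring_1 \<Rightarrow> 'n::ab_group_add \<Rightarrow> 'n) \<Rightarrow> nat \<Rightarrow> nat \<Rightarrow> (nat \<Rightarrow> nat \<Rightarrow> 'a)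
    \<Rightarrow> (nat \<Rightarrow> 'n) \<Rightarrow> (nat \<Rightarrow> 'n)" where
  "tens_map sm r c D x = (\<lambda>j. if j < r then (\<Sum>l<c. sm (D j l) (x l)) else 0)"

text \<open>Ext^i(M,N) = ext_X / ext_Y: cohomology of Hom(F,N).\<close>
definition ext_X :: "('a::comm_ring_1 \<Rightarrow> 'n::ab_group_add \<Rightarrow> 'n) \<Rightarrow> (nat \<Rightarrow> nat) \<Rightarrow> (nat \<Rightarrow> nat \<Rightarrow> nat \<Rightarrow> 'a)
    \<Rightarrow> nat \<Rightarrow> (nat \<Rightarrow> 'n) set" where
  "ext_X sm k d i = {y \<in> fvec (k i). dual_map sm (k i) (k (Suc i)) (d i) y = 0}"

definition ext_Y :: "('a::comm_ring_1 \<Rightarrow> 'n::ab_group_add \<Rightarrow> 'n) \<Rightarrow> (nat \<Rightarrow> nat) \<Rightarrow> (nat \<Rightarrow> nat \<Rightarrow> nat \<Rightarrow> 'a)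
    \<Rightarrow> nat \<Rightarrow> (nat \<Rightarrow> 'n) set" where
  "ext_Y sm k d i = (if i = 0 then {0}
     else dual_map sm (k (i - 1)) (k i) (d (i - 1)) ` fvec (k (i - 1)))"

text \<open>Tor_i(M,N) = tor_X / tor_Y: homology of F \<otimes> N.\<close>
definition tor_X :: "('a::comm_ring_1 \<Rightarrow> 'n::ab_group_add \<Rightarrow> 'n) \<Rightarrow> (nat \<Rightarrow> nat) \<Rightarrow> (nat \<Rightarrow> nat \<Rightarrow> nat \<Rightarrow> 'a)
    \<Rightarrow> nat \<Rightarrow> (nat \<Rightarrow> 'n) set" where
  "tor_X sm k d i = (if i = 0 then fvec (k 0)
     else {x \<in> fvec (k i). tens_map sm (k (i - 1)) (k i) (d (i - 1)) x = 0})"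

definition tor_Y :: "('a::comm_ring_1 \<Rightarrow> 'n::ab_group_add \<Rightarrow> 'n) \<Rightarrow> (nat \<Rightarrow> nat) \<Rightarrow> (nat \<Rightarrow> nat \<Rightarrow> nat \<Rightarrow> 'a)
    \<Rightarrow> nat \<Rightarrow> (nat \<Rightarrow> 'n) set" where
  "tor_Y sm k d i = tens_map sm (k i) (k (Suc i)) (d i) ` fvec (k (Suc i))"

end

theory Submission
  imports Defs
begin

lemma mod_sm0: assumes "module sm" shows "sm a 0 = 0"
proof -
  have "sm a (0+0) = sm a 0 + sm a 0" using assms unfolding module_def by blast
  then show ?thesis by simp
qed

lemma mod_0sm: assumes "module sm" shows "sm 0 x = 0"
proof -
  have "sm (0+0) x = sm 0 x + sm 0 x" using assms unfolding module_def by blast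
  then show ?thesis by simp
qed

lemma mod_add: "module sm \<Longrightarrow> sm a (x + y) = sm a x + sm a y"
  unfolding module_def by blast
lemma mod_addl: "module sm \<Longrightarrow> sm (a + b) x = sm a x + sm b x"
  unfolding module_def by blast
lemma mod_mult: "module sm \<Longrightarrow> sm (a * b) x = sm a (sm b x)"
  unfolding module_def by blast
lemma mod_one: "module sm \<Longrightarrow> sm 1 x = x"
  unfolding module_def by blast

lemma mod_neg: assumes "module sm" shows "sm a (- x) = - sm a x"
proof -
  have "sm a (- x + x) = sm a (-x) + sm a x" using mod_add[OF assms] by blast
  then have "sm a (-x) + sm a x = 0" using mod_sm0[OF assms] by simp
  then show ?thesis by (simp add: eq_neg_iff_add_eq_0)
qed

lemma mod_diff: assumes "module sm" shows "sm a (x - y) = sm a x - sm a y"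
  using mod_add[OF assms, of a x "-y"] mod_neg[OF assms] by simp

lemma mod_sum: assumes "module sm" shows "sm a (\<Sum>j\<in>A. f j) = (\<Sum>j\<in>A. sm a (f j))"
proof (induction A rule: infinite_finite_induct)
  case (infinite A) then show ?case using mod_sm0[OF assms] by simp
next
  case empty then show ?case using mod_sm0[OF assms] by simp
next
  case (insert x F) then show ?case using mod_add[OF assms] by simp
qed

lemma vsm_module: assumes "module sm" shows "module (vsm sm)"
  using assms unfolding module_def vsm_def by (auto simp: fun_eq_iff)

lemma submod_span: "submod sm (span sm G)"
  unfolding submod_def span_def by auto

lemma span_sup: "G \<subseteq> span sm G"
  unfolding span_def by auto

lemma span_least: "submod sm X \<Longrightarrow> G \<subseteq> X \<Longrightarrow> span sm G \<subseteq> X"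
  unfolding span_def by auto

lemma span_mono: "G \<subseteq> H \<Longrightarrow> span sm G \<subseteq> span sm H"
  by (meson span_least span_sup submod_span subset_trans)

lemma submod_0: "submod sm X \<Longrightarrow> 0 \<in> X" unfolding submod_def by blast
lemma submod_add: "submod sm X \<Longrightarrow> x \<in> X \<Longrightarrow> y \<in> X \<Longrightarrow> x + y \<in> X" unfolding submod_def by blast
lemma submod_sm: "submod sm X \<Longrightarrow> x \<in> X \<Longrightarrow> sm a x \<in> X" unfolding submod_def by blast

lemma submod_neg: assumes "module sm" "submod sm X" "x \<in> X" shows "- x \<in> X"
proof -
  have "sm (-1) x + x = sm (-1 + 1) x" using mod_addl[OF assms(1)] mod_one[OF assms(1)] by metis
  then have "sm (-1) x = - x" using mod_0sm[OF assms(1)] by (simp add: eq_neg_iff_add_eq_0)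
  then show ?thesis using submod_sm[OF assms(2,3)] by metis
qed

lemma submod_diff: assumes "module sm" "submod sm X" "x \<in> X" "y \<in> X" shows "x - y \<in> X"
  using submod_add[OF assms(2,3) submod_neg[OF assms(1,2,4)]] by simp

lemma submod_Int: "submod sm A \<Longrightarrow> submod sm B \<Longrightarrow> submod sm (A \<inter> B)"
  unfolding submod_def by auto

lemma span_insert:
  assumes "module sm"
  shows "span sm (insert g G) = {sm r g + y | r y. y \<in> span sm G}"
proof
  let ?R = "{sm r g + y | r y. y \<in> span sm G}"
  have sub: "submod sm ?R"
    unfolding submod_def
  proof (intro conjI ballI allI)
    show "0 \<in> ?R" using mod_0sm[OF assms] submod_0[OF submod_span] by force
    fix x y assume "x \<in> ?R" "y \<in> ?R"
    then obtain r1 y1 r2 y2 where "x = sm r1 g + y1" "y1 \<in> span sm G" "y = sm r2 g + y2" "y2 \<in> span sm G" by blast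
    then have "x + y = sm (r1 + r2) g + (y1 + y2)" "y1 + y2 \<in> span sm G"
      using mod_addl[OF assms] submod_add[OF submod_span] by (auto simp: algebra_simps)
    then show "x + y \<in> ?R" by blast
  next
    fix a x assume "x \<in> ?R"
    then obtain r1 y1 where "x = sm r1 g + y1" "y1 \<in> span sm G" by blast
    then have "sm a x = sm (a * r1) g + sm a y1" "sm a y1 \<in> span sm G"
      using mod_add[OF assms] mod_mult[OF assms] submod_sm[OF submod_span] by auto
    then show "sm a x \<in> ?R" by blast
  qed
  have "insert g G \<subseteq> ?R"
  proof
    fix h assume "h \<in> insert g G"
    then show "h \<in> ?R"
    proof
      assume "h = g"
      then have "h = sm 1 g + 0" using mod_one[OF assms] by simp
      then show ?thesis using submod_0[OF submod_span] by blast
    next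
      assume "h \<in> G"
      then have "h = sm 0 g + h" "h \<in> span sm G" using mod_0sm[OF assms] span_sup by auto
      then show ?thesis by blast
    qed
  qed
  then show "span sm (insert g G) \<subseteq> ?R" using span_least[OF sub] by blast
next
  show "{sm r g + y | r y. y \<in> span sm G} \<subseteq> span sm (insert g G)"
  proof
    fix x assume "x \<in> {sm r g + y | r y. y \<in> span sm G}"
    then obtain r y where "x = sm r g + y" "y \<in> span sm G" by blast
    moreover have "y \<in> span sm (insert g G)" using \<open>y \<in> span sm G\<close> span_mono[of G "insert g G"] by blast
    moreover have "g \<in> span sm (insert g G)" using span_sup by blast
    ultimately show "x \<in> span sm (insert g G)"
      using submod_add[OF submod_span] submod_sm[OF submod_span] by blast
  qed
qed

section \<open>Submodules of finitely generated modules over Noetherian rings\<close>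

lemma ideal_gen_sup: "S \<subseteq> ideal_gen S" unfolding ideal_gen_def by auto
lemma ideal_gen_least: "ideal I \<Longrightarrow> S \<subseteq> I \<Longrightarrow> ideal_gen S \<subseteq> I" unfolding ideal_gen_def by auto

lemma fg_sub:
  fixes sm :: "'a::comm_ring_1 \<Rightarrow> 'v::ab_group_add \<Rightarrow> 'v"
  assumes noeth: "noetherian_ring TYPE('a)" and md: "module sm" and fin: "finite G"
  shows "\<forall>L. submod sm L \<and> L \<subseteq> span sm G \<longrightarrow> (\<exists>H. finite H \<and> H \<subseteq> L \<and> L \<subseteq> span sm H)"
  using fin
proof (induction G rule: finite_induct)
  case empty
  then show ?case by (intro allI impI exI[of _ "{}"]) auto
next
  case (insert g G)
  show ?case
  proof (intro allI impI)
    fix L assume L: "submod sm L \<and> L \<subseteq> span sm (insert g G)"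
    have sG: "submod sm (span sm G)" by (rule submod_span)
    have "submod sm (L \<inter> span sm G)" using L submod_Int sG by blast
    then obtain H' where H': "finite H'" "H' \<subseteq> L \<inter> span sm G" "L \<inter> span sm G \<subseteq> span sm H'"
      using insert.IH by blast
    define I where "I = {r. \<exists>y\<in>span sm G. sm r g + y \<in> L}"
    have "ideal I" unfolding ideal_def I_def
    proof (intro conjI ballI allI)
      show "0 \<in> {r. \<exists>y\<in>span sm G. sm r g + y \<in> L}"
        using mod_0sm[OF md] submod_0[OF sG] submod_0 L by force
    next
      fix x y assume "x \<in> {r. \<exists>y\<in>span sm G. sm r g + y \<in> L}" "y \<in> {r. \<exists>y\<in>span sm G. sm r g + y \<in> L}"
      then obtain y1 y2 where "y1 \<in> span sm G" "sm x g + y1 \<in> L" "y2 \<in> span sm G" "sm y g + y2 \<in> L" by blast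
      then have "y1 + y2 \<in> span sm G" "sm (x+y) g + (y1 + y2) \<in> L"
        using submod_add[OF sG] submod_add[of sm L "sm x g + y1" "sm y g + y2"] L mod_addl[OF md]
        by (auto simp: algebra_simps)
      then show "x + y \<in> {r. \<exists>y\<in>span sm G. sm r g + y \<in> L}" by blast
    next
      fix r x assume "x \<in> {r. \<exists>y\<in>span sm G. sm r g + y \<in> L}"
      then obtain y1 where "y1 \<in> span sm G" "sm x g + y1 \<in> L" by blast
      then have "sm r y1 \<in> span sm G" "sm (r*x) g + sm r y1 \<in> L"
        using submod_sm[OF sG] submod_sm[of sm L "sm x g + y1" r] L mod_mult[OF md] mod_add[OF md]
        by auto
      then show "r * x \<in> {r. \<exists>y\<in>span sm G. sm r g + y \<in> L}" by blast
    qed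
    then obtain S where S: "finite S" "I = ideal_gen S" using noeth unfolding noetherian_ring_def by blast
    have "\<forall>s\<in>S. \<exists>y. y \<in> span sm G \<and> sm s g + y \<in> L"
      using ideal_gen_sup[of S] S(2) unfolding I_def by blast
    then obtain yf where yf: "\<And>s. s \<in> S \<Longrightarrow> yf s \<in> span sm G \<and> sm s g + yf s \<in> L" by metis
    define l where "l s = sm s g + yf s" for s
    define H where "H = l ` S \<union> H'"
    have finH: "finite H" unfolding H_def using S(1) H'(1) by blast
    have HL: "H \<subseteq> L" unfolding H_def l_def using yf H'(2) by blast
    define T where "T = {r. \<exists>z\<in>span sm (l ` S). z - sm r g \<in> span sm G}"
    have sl: "submod sm (span sm (l ` S))" by (rule submod_span)
    have "ideal T" unfolding ideal_def T_def
    proof (intro conjI ballI allI)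
      show "0 \<in> {r. \<exists>z\<in>span sm (l ` S). z - sm r g \<in> span sm G}"
        using mod_0sm[OF md] submod_0[OF sG] submod_0[OF sl] by force
    next
      fix x y assume "x \<in> {r. \<exists>z\<in>span sm (l ` S). z - sm r g \<in> span sm G}" "y \<in> {r. \<exists>z\<in>span sm (l ` S). z - sm r g \<in> span sm G}"
      then obtain z1 z2 where "z1 \<in> span sm (l ` S)" "z1 - sm x g \<in> span sm G" "z2 \<in> span sm (l ` S)" "z2 - sm y g \<in> span sm G" by blast
      moreover have "(z1 + z2) - sm (x + y) g = (z1 - sm x g) + (z2 - sm y g)"
        using mod_addl[OF md] by (simp add: algebra_simps)
      ultimately have "z1 + z2 \<in> span sm (l ` S)" "(z1 + z2) - sm (x + y) g \<in> span sm G"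
        using submod_add[OF sl] submod_add[OF sG] by (auto, metis)
      then show "x + y \<in> {r. \<exists>z\<in>span sm (l ` S). z - sm r g \<in> span sm G}" by blast
    next
      fix r x assume "x \<in> {r. \<exists>z\<in>span sm (l ` S). z - sm r g \<in> span sm G}"
      then obtain z where "z \<in> span sm (l ` S)" "z - sm x g \<in> span sm G" by blast
      moreover have "sm r z - sm (r * x) g = sm r (z - sm x g)" using mod_diff[OF md] mod_mult[OF md] by simp
      ultimately have "sm r z \<in> span sm (l ` S)" "sm r z - sm (r * x) g \<in> span sm G"
        using submod_sm[OF sl] submod_sm[OF sG] by auto
      then show "r * x \<in> {r. \<exists>z\<in>span sm (l ` S). z - sm r g \<in> span sm G}" by blast
    qed
    moreover have "S \<subseteq> T"
    proof
      fix s assume "s \<in> S"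
      then have "l s \<in> span sm (l ` S)" using span_sup[of "l ` S" sm] by blast
      moreover have "l s - sm s g = yf s" "yf s \<in> span sm G"
        using yf \<open>s \<in> S\<close> unfolding l_def by auto
      ultimately show "s \<in> T" unfolding T_def mem_Collect_eq by (intro bexI[of _ "l s"]) simp_all
    qed
    ultimately have IT: "I \<subseteq> T" using S(2) ideal_gen_least by blast
    have "L \<subseteq> span sm H"
    proof
      fix x assume "x \<in> L"
      then have "x \<in> span sm (insert g G)" using L by blast
      then obtain r y where xr: "x = sm r g + y" "y \<in> span sm G" using span_insert[OF md] by blast
      then have "r \<in> I" unfolding I_def using \<open>x \<in> L\<close> by blast
      then obtain z where z: "z \<in> span sm (l ` S)" "z - sm r g \<in> span sm G" using IT unfolding T_def by blast
      have "l ` S \<subseteq> L" unfolding l_def using yf by blast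
      then have zL: "z \<in> L" using z(1) span_least L by blast
      have "x - z = y - (z - sm r g)" using xr by (simp add: algebra_simps)
      then have "x - z \<in> span sm G" using submod_diff[OF md sG xr(2) z(2)] by metis
      moreover have "x - z \<in> L" using submod_diff[OF md _ \<open>x \<in> L\<close> zL] L by blast
      ultimately have "x - z \<in> span sm H'" using H'(3) by blast
      then have "x - z \<in> span sm H" using span_mono[of H' H] unfolding H_def by blast
      moreover have "z \<in> span sm H" using z(1) span_mono[of "l ` S" H] unfolding H_def by blast
      ultimately have "(x - z) + z \<in> span sm H" using submod_add[OF submod_span] by blast
      then show "x \<in> span sm H" by simp
    qed
    then show "\<exists>H. finite H \<and> H \<subseteq> L \<and> L \<subseteq> span sm H" using finH HL by blast
  qed
qed


section \<open>Powers N^m\<close>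

lemma prod_notin:
  assumes "prime_ideal p" "finite A" "\<forall>j\<in>A. f j \<notin> p"
  shows "prod f A \<notin> p"
  using assms(2,3)
proof (induction A rule: finite_induct)
  case empty
  have "1 \<notin> p"
  proof
    assume "1 \<in> p"
    then have "\<forall>r. r * 1 \<in> p" using assms(1) unfolding prime_ideal_def ideal_def by blast
    then have "p = UNIV" by auto
    then show False using assms(1) unfolding prime_ideal_def by blast
  qed
  then show ?case by simp
next
  case (insert x F)
  then show ?case using assms(1) unfolding prime_ideal_def by auto
qed

definition evec :: "nat \<Rightarrow> 'n::zero \<Rightarrow> nat \<Rightarrow> 'n" where
  "evec j a = (\<lambda>i. if i = j then a else 0)"

lemma fvec_submod: assumes "module sm" shows "submod (vsm sm) (fvec m)"
  unfolding submod_def fvec_def vsm_def using mod_sm0[OF assms] by auto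

lemma vec_in_span:
  fixes sm :: "'a::comm_ring_1 \<Rightarrow> 'n::ab_group_add \<Rightarrow> 'n"
  assumes md: "module sm" and v: "v \<in> fvec m" and vj: "\<forall>j. v j \<in> span sm G'"
  shows "v \<in> span (vsm sm) {evec j g | j g. j < m \<and> g \<in> G'}"
proof -
  let ?G0 = "{evec j g | j g. j < m \<and> g \<in> G'}"
  let ?S = "span (vsm sm) ?G0"
  have sS: "submod (vsm sm) ?S" by (rule submod_span)
  have ej: "evec j a \<in> ?S" if "j < m" "a \<in> span sm G'" for j a
  proof -
    let ?Q = "{a. evec j a \<in> ?S}"
    have "submod sm ?Q" unfolding submod_def
    proof (intro conjI ballI allI)
      have "evec j 0 = (0 :: nat \<Rightarrow> 'n)" unfolding evec_def by auto
      then show "0 \<in> ?Q" using submod_0[OF sS] by simp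
    next
      fix x y assume "x \<in> ?Q" "y \<in> ?Q"
      moreover have "evec j (x + y) = evec j x + evec j y" unfolding evec_def by auto
      ultimately show "x + y \<in> ?Q" using submod_add[OF sS] by simp
    next
      fix a x assume "x \<in> ?Q"
      moreover have "evec j (sm a x) = vsm sm a (evec j x)"
        unfolding evec_def vsm_def using mod_sm0[OF md] by auto
      ultimately show "sm a x \<in> ?Q" using submod_sm[OF sS] by simp
    qed
    moreover have "G' \<subseteq> ?Q" using span_sup[of ?G0 "vsm sm"] \<open>j < m\<close> by blast
    ultimately have "span sm G' \<subseteq> ?Q" by (rule span_least)
    then show ?thesis using that by blast
  qed
  have tr: "A \<subseteq> {..<m} \<Longrightarrow> (\<lambda>i. if i \<in> A then v i else 0) \<in> ?S" if "finite A" for A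
    using that
  proof (induction A rule: finite_induct)
    case empty
    then show ?case using submod_0[OF sS] by (simp add: zero_fun_def)
  next
    case (insert j A)
    have "(\<lambda>i. if i \<in> insert j A then v i else 0) = (\<lambda>i. if i \<in> A then v i else 0) + evec j (v j)"
      using insert.hyps(2) unfolding evec_def by (auto simp: fun_eq_iff)
    moreover have "evec j (v j) \<in> ?S" using ej insert.prems vj by auto
    ultimately show ?case using insert submod_add[OF sS] by auto
  qed
  have "v = (\<lambda>i. if i \<in> {..<m} then v i else 0)" using v unfolding fvec_def by (auto simp: fun_eq_iff)
  then show ?thesis using tr[of "{..<m}"] by simp
qed

lemma dim_supp_mono: "supp sm X Y \<subseteq> supp sm' X' Y' \<Longrightarrow> dim_supp sm X Y \<le> dim_supp sm' X' Y'"
  unfolding dim_supp_def by (intro Sup_subset_mono image_mono)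

lemma main_lemma:
  fixes smN :: "'a::comm_ring_1 \<Rightarrow> 'n::ab_group_add \<Rightarrow> 'n"
  assumes noeth: "noetherian_ring TYPE('a)" and md: "module smN"
    and nd: "in_dim_lt smN UNIV {0} n"
    and sX: "submod (vsm smN) X" and Xm: "X \<subseteq> fvec m"
  shows "in_dim_lt (vsm smN) X Y n"
proof -
  obtain G where G: "finite G" "dim_supp smN UNIV (span smN (G \<union> {0})) < ereal (real n)"
    using nd unfolding in_dim_lt_def by blast
  define G' where "G' = G \<union> {0}"
  define G0 where "G0 = {evec j g | j g. j < m \<and> g \<in> G'}"
  have "G0 = (\<lambda>(j, g). evec j g) ` ({..<m} \<times> G')" unfolding G0_def by auto
  then have fG0: "finite G0" using G(1) unfolding G'_def by simp
  have mdv: "module (vsm smN)" by (rule vsm_module[OF md])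
  define L where "L = X \<inter> span (vsm smN) G0"
  have "submod (vsm smN) L" unfolding L_def using submod_Int[OF sX submod_span] .
  then obtain H where H: "finite H" "H \<subseteq> L" "L \<subseteq> span (vsm smN) H"
    using fg_sub[OF noeth mdv fG0] unfolding L_def by blast
  have "supp (vsm smN) X (span (vsm smN) (H \<union> Y)) \<subseteq> supp smN UNIV (span smN G')"
  proof
    fix p assume "p \<in> supp (vsm smN) X (span (vsm smN) (H \<union> Y))"
    then obtain x where p: "prime_ideal p" and x: "x \<in> X"
      and nx: "\<forall>s. s \<notin> p \<longrightarrow> vsm smN s x \<notin> span (vsm smN) (H \<union> Y)"
      unfolding supp_def by blast
    show "p \<in> supp smN UNIV (span smN G')"
    proof (rule ccontr)
      assume "p \<notin> supp smN UNIV (span smN G')"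
      then have "\<forall>y. \<exists>s. s \<notin> p \<and> smN s y \<in> span smN G'" using p unfolding supp_def by blast
      then obtain sf where sf: "\<And>y. sf y \<notin> p \<and> smN (sf y) y \<in> span smN G'" by metis
      define s where "s = prod (\<lambda>j. sf (x j)) {..<m}"
      have sp: "s \<notin> p" unfolding s_def by (rule prod_notin[OF p]) (simp_all add: sf)
      have xm: "x \<in> fvec m" using x Xm by blast
      have "\<forall>j. vsm smN s x j \<in> span smN G'"
      proof
        fix j
        show "vsm smN s x j \<in> span smN G'"
        proof (cases "j < m")
          case True
          have "s = prod (\<lambda>j. sf (x j)) ({..<m} - {j}) * sf (x j)"
            unfolding s_def using prod.remove[of "{..<m}" j "\<lambda>j. sf (x j)"] True by (simp add: mult.commute)
          then have "vsm smN s x j = smN (prod (\<lambda>j. sf (x j)) ({..<m} - {j})) (smN (sf (x j)) (x j))"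
            unfolding vsm_def using mod_mult[OF md] by simp
          then show ?thesis using sf submod_sm[OF submod_span] by metis
        next
          case False
          then have "x j = 0" using xm unfolding fvec_def by simp
          then show ?thesis unfolding vsm_def using mod_sm0[OF md] submod_0[OF submod_span] by simp
        qed
      qed
      moreover have "vsm smN s x \<in> fvec m" using submod_sm[OF fvec_submod[OF md] xm] .
      ultimately have "vsm smN s x \<in> span (vsm smN) G0"
        unfolding G0_def using vec_in_span[OF md] by blast
      moreover have "vsm smN s x \<in> X" using submod_sm[OF sX x] .
      ultimately have "vsm smN s x \<in> span (vsm smN) H" using H(3) unfolding L_def by blast
      then have "vsm smN s x \<in> span (vsm smN) (H \<union> Y)" using span_mono[of H "H \<union> Y"] by blast
      then show False using nx sp by blast
    qed
  qed
  then have "dim_supp (vsm smN) X (span (vsm smN) (H \<union> Y)) < ereal (real n)"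
    using dim_supp_mono G(2) unfolding G'_def by (meson order.strict_trans1)
  moreover have "H \<subseteq> X" using H(2) unfolding L_def by blast
  ultimately show ?thesis unfolding in_dim_lt_def using H(1) by blast
qed


lemma kernel_submod:
  assumes md: "module sm"
    and F0: "F 0 = 0" and Fadd: "\<And>y z. F (y + z) = F y + F z"
    and Fsm: "\<And>a y. F (vsm sm a y) = vsm sm' a (F y)" and md': "module sm'"
  shows "submod (vsm sm) {y \<in> fvec r. F y = 0}"
  unfolding submod_def
proof (intro conjI ballI allI)
  show "0 \<in> {y \<in> fvec r. F y = 0}" using F0 submod_0[OF fvec_submod[OF md]] by simp
next
  fix x y assume "x \<in> {y \<in> fvec r. F y = 0}" "y \<in> {y \<in> fvec r. F y = 0}"
  then show "x + y \<in> {y \<in> fvec r. F y = 0}" using Fadd submod_add[OF fvec_submod[OF md]] by simp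
next
  fix a x assume "x \<in> {y \<in> fvec r. F y = 0}"
  moreover have "vsm sm' a 0 = 0" unfolding vsm_def using mod_sm0[OF md'] by (simp add: fun_eq_iff)
  ultimately show "vsm sm a x \<in> {y \<in> fvec r. F y = 0}" using Fsm submod_sm[OF fvec_submod[OF md]] by simp
qed

lemma dual_map_lin:
  assumes md: "module sm"
  shows "dual_map sm r c D 0 = 0" "dual_map sm r c D (y + z) = dual_map sm r c D y + dual_map sm r c D z"
    "dual_map sm r c D (vsm sm a y) = vsm sm a (dual_map sm r c D y)"
proof -
  show "dual_map sm r c D 0 = 0" unfolding dual_map_def using mod_sm0[OF md] by (simp add: fun_eq_iff)
  show "dual_map sm r c D (y + z) = dual_map sm r c D y + dual_map sm r c D z"
    unfolding dual_map_def using mod_add[OF md] by (simp add: fun_eq_iff sum.distrib)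
  have "sm (D j l) (sm a (y j)) = sm a (sm (D j l) (y j))" for j l
    using mod_mult[OF md, of "D j l" a] mod_mult[OF md, of a "D j l"] by (simp add: mult.commute)
  then show "dual_map sm r c D (vsm sm a y) = vsm sm a (dual_map sm r c D y)"
    unfolding dual_map_def vsm_def by (simp add: fun_eq_iff mod_sum[OF md] mod_sm0[OF md])
qed

lemma tens_map_lin:
  assumes md: "module sm"
  shows "tens_map sm r c D 0 = 0" "tens_map sm r c D (y + z) = tens_map sm r c D y + tens_map sm r c D z"
    "tens_map sm r c D (vsm sm a y) = vsm sm a (tens_map sm r c D y)"
proof -
  show "tens_map sm r c D 0 = 0" unfolding tens_map_def using mod_sm0[OF md] by (simp add: fun_eq_iff)
  show "tens_map sm r c D (y + z) = tens_map sm r c D y + tens_map sm r c D z"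
    unfolding tens_map_def using mod_add[OF md] by (simp add: fun_eq_iff sum.distrib)
  have "sm (D j l) (sm a (y l)) = sm a (sm (D j l) (y l))" for j l
    using mod_mult[OF md, of "D j l" a] mod_mult[OF md, of a "D j l"] by (simp add: mult.commute)
  then show "tens_map sm r c D (vsm sm a y) = vsm sm a (tens_map sm r c D y)"
    unfolding tens_map_def vsm_def by (simp add: fun_eq_iff mod_sum[OF md] mod_sm0[OF md])
qed

lemma ext_X_ok:
  assumes md: "module sm"
  shows "submod (vsm sm) (ext_X sm k d i) \<and> ext_X sm k d i \<subseteq> fvec (k i)"
  unfolding ext_X_def
  using kernel_submod[OF md dual_map_lin[OF md, of "k i" "k (Suc i)" "d i"] md, of "k i"] by blast

lemma tor_X_ok:
  assumes md: "module sm"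
  shows "submod (vsm sm) (tor_X sm k d i) \<and> tor_X sm k d i \<subseteq> fvec (k i)"
  unfolding tor_X_def
  using kernel_submod[OF md tens_map_lin[OF md, of "k (i - 1)" "k i" "d (i - 1)"] md, of "k i"] fvec_submod[OF md] by auto

theorem corollary2p16:
  fixes smM :: "'a::comm_ring_1 \<Rightarrow> 'm::ab_group_add \<Rightarrow> 'm"
    and smN :: "'a \<Rightarrow> 'n::ab_group_add \<Rightarrow> 'n"
    and n :: nat
  assumes "noetherian_ring TYPE('a)"
    and "module smN"
    and "in_dim_lt smN UNIV {0} n"
  shows "(module smM \<and> fin_gen smM \<longrightarrow>
           (\<forall>k d g. free_resolution smM k d g \<longrightarrow>
              (\<forall>i. in_dim_lt (vsm smN) (ext_X smN k d i) (ext_Y smN k d i) n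
                 \<and> in_dim_lt (vsm smN) (tor_X smN k d i) (tor_Y smN k d i) n)))
       \<and> (\<forall>(a::'a set) k d. ideal a \<and> k 0 = 1 \<and> exact_tail k d
            \<and> dmap 1 (k 1) (d 0) ` fvec (k 1) = {v \<in> fvec 1. v 0 \<in> a} \<longrightarrow>
              (\<forall>i. in_dim_lt (vsm smN) (ext_X smN k d i) (ext_Y smN k d i) n
                 \<and> in_dim_lt (vsm smN) (tor_X smN k d i) (tor_Y smN k d i) n))"
proof -
  have all: "\<And>k d i. in_dim_lt (vsm smN) (ext_X smN k d i) (ext_Y smN k d i) n
                 \<and> in_dim_lt (vsm smN) (tor_X smN k d i) (tor_Y smN k d i) n"
    using main_lemma[OF assms] ext_X_ok[OF assms(2)] tor_X_ok[OF assms(2)] by blast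
  show ?thesis using all by blast
qed

end
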